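(* Let $q$ be a prime power and $n\ge 1$ an integer. For every integer $k$ with $1\le k< n(q-1)$ we have $\dim(C_{n,k}^q)<\dim(C_{n,k+1}^q)$.
   Context: For a prime power $q$ and integers $n\ge 1$, $k\ge 0$, the projective Reed-Muller code $C_{n,k}^q\subseteq \mathbb{F}_q^N$, $N=\frac{q^{n+1}-1}{q-1}$, is defined as follows. For each point of $\mathbb{P}^n(\mathbb{F}_q)$ choose the affine representative $(p_0,\dots,p_n)\in\mathbb{F}_q^{n+1}\setminus\{0\}$ whose left-most nonzero coordinate equals $1$, and fix an ordering $P_1',\dots,P_N'$ of these representatives. Then $C_{n,k}^q=\{(F(P_1'),\dots,F(P_N')) : F\in \mathbb{F}_q[x_0,\dots,x_n]_k\}$, where $\mathbb{F}_q[x_0,\dots,x_n]_k$ is the space of homogeneous polynomials of degree $k$ together with $0$ (so $C_{n,0}^q$ is spanned by the all-ones vector $\mathbf{1}$). *)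

theory Defs
  imports Complex_Main "HOL-Library.Function_Algebras"
begin

text \<open>Points of P^n(F_q): affine representatives (p_0,...,p_n) in F_q^(n+1), encoded as
  functions nat => 'a vanishing outside {0..n}, whose left-most nonzero coordinate is 1.\<close>
definition proj_points :: "nat \<Rightarrow> (nat \<Rightarrow> 'a::field) set" where
  "proj_points n = {p. (\<forall>i>n. p i = 0) \<and> (\<exists>j\<le>n. p j = 1 \<and> (\<forall>i<j. p i = 0))}"

definition monomials_deg :: "nat \<Rightarrow> nat \<Rightarrow> (nat \<Rightarrow> nat) set" where
  "monomials_deg n k = {e. (\<forall>i>n. e i = 0) \<and> (\<Sum>i\<le>n. e i) = k}"

definition hom_poly_eval :: "nat \<Rightarrow> nat \<Rightarrow> ((nat \<Rightarrow> nat) \<Rightarrow> 'a::field) \<Rightarrow> (nat \<Rightarrow> 'a) \<Rightarrow> 'a" where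
  "hom_poly_eval n k c p = (\<Sum>e\<in>monomials_deg n k. c e * (\<Prod>i\<le>n. p i ^ e i))"

text \<open>Projective Reed-Muller code C_{n,k}^q, q = CARD('a): the set of evaluation vectors,
  indexed by the points of P^n (zero outside the index set).\<close>
definition proj_RM_code :: "nat \<Rightarrow> nat \<Rightarrow> ((nat \<Rightarrow> 'a::{finite,field}) \<Rightarrow> 'a) set" where
  "proj_RM_code n k =
     {(\<lambda>p. if p \<in> proj_points n then hom_poly_eval n k c p else 0) | c. True}"

definition code_dim :: "((nat \<Rightarrow> 'a::{finite,field}) \<Rightarrow> 'a) set \<Rightarrow> nat" where
  "code_dim C = vector_space.dim (\<lambda>(a::'a) v. (\<lambda>x. a * v x)) C"

end

theory Submission
  imports Defs "HOL-Computational_Algebra.Polynomial" "HOL-Library.Cardinality"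
begin


lemma of_nat_card_zero: "of_nat (card (UNIV::'a::{finite,field} set)) = (0::'a)"
proof -
  have "(\<Sum>t\<in>UNIV. t + 1) = (\<Sum>t\<in>UNIV. (t::'a))"
    by (rule sum.reindex_bij_witness[where i="\<lambda>t. t - 1" and j="\<lambda>t. t+1"]) auto
  then show ?thesis by (simp add: sum.distrib)
qed

lemma card_ge2: "card (UNIV::'a::{finite,field} set) \<ge> 2"
proof -
  have "{0::'a, 1} \<subseteq> UNIV" by auto
  then have "card {0::'a,1} \<le> CARD('a)" by (intro card_mono) auto
  then show ?thesis by simp
qed

lemma card_nonzero: "card (UNIV - {0::'a::{finite,field}}) = CARD('a) - 1"
  by (simp add: card_Diff_singleton)

lemma fermat_field:
  fixes x :: "'a::{finite,field}"
  assumes "x \<noteq> 0" shows "x ^ (CARD('a) - 1) = 1"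
proof -
  let ?U = "UNIV - {0::'a}"
  have "(\<Prod>t\<in>?U. x * t) = (\<Prod>t\<in>?U. t)"
    by (rule prod.reindex_bij_witness[where i="\<lambda>t. t / x" and j="\<lambda>t. x * t"]) (use assms in auto)
  then have "x ^ card ?U * (\<Prod>t\<in>?U. t) = (\<Prod>t\<in>?U. t)"
    by (simp add: prod.distrib)
  moreover have "(\<Prod>t\<in>?U. t) \<noteq> 0" by simp
  ultimately show ?thesis by (simp add: card_nonzero)
qed

lemma exists_pow_ne1:
  assumes "0 < r" "r < card (UNIV::'a::{finite,field} set) - 1"
  shows "\<exists>g::'a. g \<noteq> 0 \<and> g ^ r \<noteq> 1"
proof (rule ccontr)
  assume "\<not> ?thesis"
  then have all: "\<And>g::'a. g \<noteq> 0 \<Longrightarrow> g ^ r = 1" by blast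
  define p :: "'a poly" where "p = monom 1 r + [:-1:]"
  have dp: "degree p = r" using assms(1) by (simp add: p_def degree_add_eq_left degree_monom_eq)
  then have "p \<noteq> 0" using assms(1) by auto
  have "UNIV - {0} \<subseteq> {x. poly p x = 0}" using all by (auto simp: p_def poly_monom)
  then have "card (UNIV - {0::'a}) \<le> card {x. poly p x = 0}" by (intro card_mono) auto
  also have "\<dots> \<le> r" using card_poly_roots_bound[OF \<open>p \<noteq> 0\<close>] dp by simp
  finally show False using assms card_nonzero[where 'a='a] by simp
qed

lemma char_sum:
  "(\<Sum>t\<in>(UNIV::'a::{finite,field} set). t ^ c) = (if 0 < c \<and> (CARD('a) - 1) dvd c then -1 else 0)"
proof (cases "c = 0")
  case True then show ?thesis by (simp add: of_nat_card_zero)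
next
  case False
  show ?thesis
  proof (cases "(CARD('a) - 1) dvd c")
    case True
    then obtain s where s: "c = (CARD('a) - 1) * s" by blast
    have "t ^ c = (if t = 0 then 0 else 1)" for t::'a
    proof (cases "t = 0")
      case False
      have "t ^ c = (t ^ (CARD('a) - 1)) ^ s" by (simp add: s power_mult)
      then show ?thesis using fermat_field[OF False] False by simp
    qed (use False in simp)
    then have "(\<Sum>t\<in>(UNIV::'a set). t ^ c) = (\<Sum>t\<in>(UNIV::'a set). if t = 0 then 0 else (1::'a))" by simp
    also have "\<dots> = of_nat (card (UNIV - {0::'a}))"
      by (simp add: sum.If_cases Compl_eq_Diff_UNIV)
    also have "\<dots> = of_nat CARD('a) - 1" using card_ge2[where 'a='a]
      by (simp add: card_nonzero of_nat_diff)
    finally show ?thesis using True False by (simp add: of_nat_card_zero)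
  next
    case nd: False
    let ?m = "CARD('a) - 1"
    define r where "r = c mod ?m"
    have m0: "?m > 0" using card_ge2[where 'a='a] by simp
    have r0: "0 < r" using nd by (simp add: r_def dvd_eq_mod_eq_0)
    have rm: "r < ?m" using m0 by (simp add: r_def)
    obtain g :: 'a where g: "g \<noteq> 0" "g ^ r \<noteq> 1" using exists_pow_ne1[OF r0 rm] by blast
    have "g ^ c = g ^ r"
    proof -
      have "c = ?m * (c div ?m) + r" by (simp add: r_def)
      then have "g ^ c = (g ^ ?m) ^ (c div ?m) * g ^ r" by (metis power_add power_mult)
      then show ?thesis using fermat_field[OF g(1)] by simp
    qed
    have "(\<Sum>t\<in>(UNIV::'a set). (g * t) ^ c) = (\<Sum>t\<in>(UNIV::'a set). t ^ c)"
      by (rule sum.reindex_bij_witness[where i="\<lambda>t. t / g" and j="\<lambda>t. g * t"]) (use g in auto)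
    then have "g ^ c * (\<Sum>t\<in>(UNIV::'a set). t ^ c) = (\<Sum>t\<in>(UNIV::'a set). t ^ c)"
      by (simp add: power_mult_distrib sum_distrib_left)
    then have "(g ^ c - 1) * (\<Sum>t\<in>(UNIV::'a set). t ^ c) = 0" by (simp add: algebra_simps)
    then show ?thesis using g \<open>g ^ c = g ^ r\<close> nd by auto
  qed
qed



definition supp0 :: "nat set \<Rightarrow> (nat \<Rightarrow> 'a::zero) set" where
  "supp0 I = {x. \<forall>i. i \<notin> I \<longrightarrow> x i = 0}"

definition mon :: "nat \<Rightarrow> (nat \<Rightarrow> nat) \<Rightarrow> (nat \<Rightarrow> 'a::comm_semiring_1) \<Rightarrow> 'a" where
  "mon n c x = (\<Prod>i\<le>n. x i ^ c i)"

lemma finite_supp0: "finite I \<Longrightarrow> finite (supp0 I :: (nat \<Rightarrow> 'a::{finite,zero}) set)"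
proof -
  assume "finite I"
  have "supp0 I = {f::nat\<Rightarrow>'a. \<forall>x. (x \<in> I \<longrightarrow> f x \<in> UNIV) \<and> (x \<notin> I \<longrightarrow> f x = 0)}"
    by (auto simp: supp0_def)
  then show ?thesis using finite_set_of_finite_funs[OF \<open>finite I\<close>, of "UNIV::'a set" 0] by simp
qed

lemma sum_supp0_prod:
  fixes c :: "nat \<Rightarrow> nat"
  assumes "finite I"
  shows "(\<Sum>x\<in>(supp0 I::(nat\<Rightarrow>'a::{finite,field}) set). \<Prod>i\<in>I. x i ^ c i)
         = (\<Prod>i\<in>I. \<Sum>t\<in>(UNIV::'a set). t ^ c i)"
  using assms
proof (induction I rule: finite_induct)
  case empty
  have "supp0 {} = {(\<lambda>_. 0::'a)}" by (auto simp: supp0_def)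
  then show ?case by simp
next
  case (insert a I)
  let ?h = "\<lambda>(t::'a, x::nat\<Rightarrow>'a). x(a := t)"
  have img: "supp0 (insert a I) = ?h ` (UNIV \<times> supp0 I)"
  proof (rule set_eqI, rule iffI)
    fix y :: "nat \<Rightarrow> 'a" assume "y \<in> supp0 (insert a I)"
    then have "y = ?h (y a, y(a:=0))" "y(a:=0) \<in> supp0 I" by (auto simp: supp0_def)
    then show "y \<in> ?h ` (UNIV \<times> supp0 I)" by blast
  qed (auto simp: supp0_def)
  have inj: "inj_on ?h (UNIV \<times> supp0 I)"
  proof (rule inj_onI, clarify)
    fix t x t' x' assume "x \<in> supp0 I" "x' \<in> supp0 I" and eq: "x(a := t) = x'(a := t')"
    then have "x a = 0" "x' a = 0" using insert(2) by (auto simp: supp0_def)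
    then show "t = t' \<and> x = x'" using eq by (metis fun_upd_idem fun_upd_same fun_upd_upd)
  qed
  have "(\<Sum>y\<in>supp0 (insert a I). \<Prod>i\<in>insert a I. y i ^ c i)
       = (\<Sum>y\<in>?h ` (UNIV \<times> supp0 I). \<Prod>i\<in>insert a I. y i ^ c i)"
    by (simp only: img)
  also have "\<dots> = (\<Sum>z\<in>UNIV \<times> supp0 I. \<Prod>i\<in>insert a I. (?h z) i ^ c i)"
    by (rule sum.reindex[OF inj, unfolded comp_def])
  also have "\<dots> = (\<Sum>z\<in>UNIV \<times> supp0 I. fst z ^ c a * (\<Prod>i\<in>I. snd z i ^ c i))"
  proof (rule sum.cong[OF refl])
    fix z :: "'a \<times> (nat \<Rightarrow> 'a)"
    obtain t x where z: "z = (t, x)" by fastforce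
    have "(\<Prod>i\<in>I. (x(a:=t)) i ^ c i) = (\<Prod>i\<in>I. x i ^ c i)"
      using insert(2) by (intro prod.cong) auto
    then show "(\<Prod>i\<in>insert a I. (?h z) i ^ c i) = fst z ^ c a * (\<Prod>i\<in>I. snd z i ^ c i)"
      using insert(1,2) z by simp
  qed
  also have "\<dots> = (\<Sum>t\<in>UNIV. \<Sum>x\<in>supp0 I. t ^ c a * (\<Prod>i\<in>I. x i ^ c i))"
    by (simp add: sum.cartesian_product case_prod_unfold)
  also have "\<dots> = (\<Sum>t\<in>UNIV. t ^ c a) * (\<Sum>x\<in>supp0 I. \<Prod>i\<in>I. x i ^ c i)"
    by (simp add: sum_product)
  finally show ?case using insert by simp
qed

definition Hj :: "nat \<Rightarrow> nat \<Rightarrow> (nat \<Rightarrow> 'a::field) set" where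
  "Hj n j = {p\<in>proj_points n. \<forall>i<j. p i = 0}"

lemma pivot_unique:
  fixes p :: "nat \<Rightarrow> 'a::field"
  assumes "p s \<noteq> 0" "\<forall>i<s. p i = 0" "p s' \<noteq> 0" "\<forall>i<s'. p i = 0"
  shows "s = s'"
  using assms by (metis linorder_neqE_nat)

lemma scale_bij:
  fixes n j :: nat
  shows "bij_betw (\<lambda>(l::'a::field, p). (\<lambda>i. l * p i)) ((UNIV - {0}) \<times> Hj n j)
          (supp0 {j..n} - {0})"
proof -
  let ?f = "\<lambda>(l::'a, p). (\<lambda>i. l * p i)"
  have "inj_on ?f ((UNIV - {0}) \<times> Hj n j)"
  proof (rule inj_onI)
    fix y y' assume y: "y \<in> (UNIV - {0}) \<times> Hj n j" "y' \<in> (UNIV - {0}) \<times> Hj n j"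
      and eq0: "?f y = ?f y'"
    obtain l p l' p' where yy: "y = (l,p)" "y' = (l',p')" by fastforce
    have l: "l \<noteq> 0" "l' \<noteq> 0" and p: "p \<in> Hj n j" "p' \<in> Hj n j" using y yy by auto
    have eq: "(\<lambda>i. l * p i) = (\<lambda>i. l' * p' i)" using eq0 yy by simp
    obtain s where s: "p s = 1" "\<forall>i<s. p i = 0" using p by (auto simp: Hj_def proj_points_def)
    obtain s' where s': "p' s' = 1" "\<forall>i<s'. p' i = 0" using p by (auto simp: Hj_def proj_points_def)
    have eqi: "l * p i = l' * p' i" for i using eq by meson
    have "(\<lambda>i. l * p i) s \<noteq> 0" "\<forall>i<s. (\<lambda>i. l * p i) i = 0" using s l by auto
    moreover have "(\<lambda>i. l * p i) s' \<noteq> 0" "\<forall>i<s'. (\<lambda>i. l * p i) i = 0"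
      using s' l eqi by auto
    ultimately have "s = s'" by (rule pivot_unique)
    then have "l = l'" using eqi[of s] s s' by simp
    then show "y = y'" using eqi l yy by auto
  qed
  moreover have "?f ` ((UNIV - {0}) \<times> Hj n j) = supp0 {j..n} - {0}"
  proof (rule set_eqI, rule iffI)
    fix x assume "x \<in> ?f ` ((UNIV - {0}) \<times> Hj n j)"
    then obtain l p where x: "x = (\<lambda>i. l * p i)" "l \<noteq> 0" "p \<in> Hj n j" by auto
    obtain s where s: "p s = 1" using x(3) by (auto simp: Hj_def proj_points_def)
    have "x s \<noteq> 0" using x s by simp
    then have "x \<noteq> 0" by auto
    moreover have "x \<in> supp0 {j..n}" using x(1,3)
      by (auto simp: supp0_def Hj_def proj_points_def not_le)
    ultimately show "x \<in> supp0 {j..n} - {0}" by simp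
  next
    fix x :: "nat \<Rightarrow> 'a" assume x: "x \<in> supp0 {j..n} - {0}"
    then obtain i0 where "x i0 \<noteq> 0" by (auto simp: fun_eq_iff)
    define s where "s = (LEAST i. x i \<noteq> 0)"
    have xs: "x s \<noteq> 0" unfolding s_def by (rule LeastI[of _ i0]) fact
    have below: "\<forall>i<s. x i = 0" unfolding s_def using not_less_Least by blast
    have sn: "s \<le> n" "j \<le> s" using xs x by (auto simp: supp0_def)
    define p where "p = (\<lambda>i. x i / x s)"
    have "p \<in> Hj n j"
      unfolding Hj_def proj_points_def p_def using xs below sn x
      by (auto simp: supp0_def intro!: exI[of _ s])
    moreover have "x = ?f (x s, p)" using xs by (auto simp: p_def)
    ultimately show "x \<in> ?f ` ((UNIV - {0}) \<times> Hj n j)" using xs by blast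
  qed
  ultimately show ?thesis by (simp add: bij_betw_def)
qed

lemma mon_scale: "mon n c (\<lambda>i. l * p i) = l ^ (\<Sum>i\<le>n. c i) * mon n c p"
  by (simp add: mon_def power_mult_distrib prod.distrib power_sum)

lemma sum_Hj_mon:
  fixes c :: "nat \<Rightarrow> nat"
  assumes "(CARD('a::{finite,field}) - 1) dvd (\<Sum>i\<le>n. c i)"
  shows "(\<Sum>p\<in>(Hj n j::(nat\<Rightarrow>'a) set). mon n c p) = - (\<Sum>x\<in>supp0 {j..n} - {0}. mon n c x)"
proof -
  let ?U = "UNIV - {0::'a}"
  obtain s where D: "(\<Sum>i\<le>n. c i) = (CARD('a) - 1) * s" using assms by blast
  have pw: "l ^ (\<Sum>i\<le>n. c i) = 1" if "l \<noteq> 0" for l :: 'a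
    unfolding D power_mult using fermat_field[OF that] by simp
  have "(\<Sum>x\<in>supp0 {j..n} - {0}. mon n c x)
      = (\<Sum>y\<in>?U \<times> (Hj n j::(nat\<Rightarrow>'a) set). mon n c ((\<lambda>(l, p). (\<lambda>i. l * p i)) y))"
    by (rule sum.reindex_bij_betw[OF scale_bij, symmetric])
  also have "\<dots> = (\<Sum>y\<in>?U \<times> (Hj n j::(nat\<Rightarrow>'a) set). mon n c (snd y))"
  proof (rule sum.cong[OF refl])
    fix y assume "y \<in> ?U \<times> (Hj n j::(nat\<Rightarrow>'a) set)"
    then obtain l p where "y = (l,p)" "l \<noteq> 0" by auto
    then show "mon n c ((\<lambda>(l, p). (\<lambda>i. l * p i)) y) = mon n c (snd y)"
      by (simp add: mon_scale pw)
  qed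
  also have "\<dots> = (\<Sum>(l,p)\<in>?U \<times> (Hj n j::(nat\<Rightarrow>'a) set). mon n c p)"
    by (simp add: case_prod_unfold)
  also have "\<dots> = (\<Sum>l\<in>?U. \<Sum>p\<in>(Hj n j::(nat\<Rightarrow>'a) set). mon n c p)"
    by (rule sum.cartesian_product[symmetric])
  also have "\<dots> = of_nat (card ?U) * (\<Sum>p\<in>(Hj n j::(nat\<Rightarrow>'a) set). mon n c p)"
    by simp
  also have "card ?U = CARD('a) - 1" by (rule card_nonzero)
  also have "of_nat (CARD('a) - 1) = (-1::'a)"
    using card_ge2[where 'a='a] by (simp add: of_nat_diff of_nat_card_zero)
  finally show ?thesis by (simp add: zero_fun_def)
qed



lemma mon_zero: "i \<le> n \<Longrightarrow> 0 < c i \<Longrightarrow> mon n c (0::nat\<Rightarrow>'a::comm_semiring_1) = 0"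
  unfolding mon_def by (rule prod_zero) (auto intro!: bexI[of _ i] simp: zero_power)

lemma sum_remove0:
  assumes "i \<le> n" "0 < c i"
  shows "(\<Sum>x\<in>supp0 {j..n} - {0}. mon n c x) = (\<Sum>x\<in>(supp0 {j..n}::(nat\<Rightarrow>'a::{finite,field}) set). mon n c x)"
proof -
  have "finite (supp0 {j..n}::(nat\<Rightarrow>'a) set)" by (rule finite_supp0) simp
  moreover have "(0::nat\<Rightarrow>'a) \<in> supp0 {j..n}" by (simp add: supp0_def)
  ultimately show ?thesis using mon_zero[of i n c, where 'a='a] assms
    by (simp add: sum_diff1)
qed

lemma sum_H0_vanish:
  fixes c :: "nat \<Rightarrow> nat"
  assumes "1 \<le> n" and sc: "(\<Sum>i\<le>n. c i) = n * (CARD('a::{finite,field}) - 1)"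
  shows "(\<Sum>p\<in>(Hj n 0::(nat\<Rightarrow>'a) set). mon n c p) = 0"
proof -
  let ?m = "CARD('a) - 1"
  have m0: "?m \<ge> 1" using card_ge2[where 'a='a] by simp
  have "(\<Sum>i\<le>n. c i) > 0" using sc assms m0 by simp
  have "\<exists>i\<in>{..n}. c i \<noteq> 0"
  proof (rule ccontr)
    assume "\<not> ?thesis"
    then have "(\<Sum>i\<le>n. c i) = 0" by simp
    then show False using \<open>(\<Sum>i\<le>n. c i) > 0\<close> by simp
  qed
  then obtain i where i: "i \<le> n" "0 < c i" by auto
  have "(\<Sum>p\<in>(Hj n 0::(nat\<Rightarrow>'a) set). mon n c p) = - (\<Sum>x\<in>supp0 {0..n} - {0}. mon n c x)"
    by (rule sum_Hj_mon) (simp add: sc)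
  also have "\<dots> = - (\<Sum>x\<in>(supp0 {0..n}::(nat\<Rightarrow>'a) set). mon n c x)"
    using sum_remove0[of i n c 0, where 'a='a] i by simp
  also have "(\<Sum>x\<in>(supp0 {0..n}::(nat\<Rightarrow>'a) set). mon n c x)
        = (\<Prod>i\<in>{0..n}. \<Sum>t\<in>(UNIV::'a set). t ^ c i)"
    unfolding mon_def atMost_atLeast0 by (rule sum_supp0_prod) simp
  also have "\<dots> = 0"
  proof (rule ccontr)
    assume "(\<Prod>i\<in>{0..n}. \<Sum>t\<in>(UNIV::'a set). t ^ c i) \<noteq> 0"
    then have "\<forall>i\<in>{0..n}. (\<Sum>t\<in>(UNIV::'a set). t ^ c i) \<noteq> 0" by auto
    then have "\<forall>i\<in>{0..n}. 0 < c i \<and> ?m dvd c i" by (auto simp: char_sum split: if_splits)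
    then have "\<forall>i\<in>{0..n}. ?m \<le> c i" by (auto intro: dvd_imp_le)
    then have "(\<Sum>i\<in>{0..n}. ?m) \<le> (\<Sum>i\<in>{0..n}. c i)" by (intro sum_mono) auto
    then have "(n+1) * ?m \<le> n * ?m" using sc by (simp add: atMost_atLeast0)
    then show False using m0 by simp
  qed
  finally show ?thesis by simp
qed

lemma sum_H1_nonvanish:
  fixes c :: "nat \<Rightarrow> nat"
  assumes "1 \<le> n" and c0: "c 0 = 0" and ci: "\<And>i. 1 \<le> i \<Longrightarrow> i \<le> n \<Longrightarrow> c i = CARD('a::{finite,field}) - 1"
  shows "(\<Sum>p\<in>(Hj n 1::(nat\<Rightarrow>'a) set). mon n c p) \<noteq> 0"
proof -
  let ?m = "CARD('a) - 1"
  have m0: "?m \<ge> 1" using card_ge2[where 'a='a] by simp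
  have sc: "(\<Sum>i\<le>n. c i) = n * ?m"
  proof -
    have "(\<Sum>i\<le>n. c i) = c 0 + (\<Sum>i\<in>{1..n}. c i)"
      by (simp add: atMost_atLeast0 sum.atLeast_Suc_atMost)
    also have "\<dots> = n * ?m" using c0 ci by simp
    finally show ?thesis .
  qed
  have "(\<Sum>p\<in>(Hj n 1::(nat\<Rightarrow>'a) set). mon n c p) = - (\<Sum>x\<in>supp0 {1..n} - {0}. mon n c x)"
    by (rule sum_Hj_mon) (simp add: sc)
  also have "\<dots> = - (\<Sum>x\<in>(supp0 {1..n}::(nat\<Rightarrow>'a) set). mon n c x)"
    using sum_remove0[of n n c 1] assms ci[of n] m0 card_ge2[where 'a='a] by simp
  also have "(\<Sum>x\<in>(supp0 {1..n}::(nat\<Rightarrow>'a) set). mon n c x)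
        = (\<Sum>x\<in>(supp0 {1..n}::(nat\<Rightarrow>'a) set). \<Prod>i\<in>{1..n}. x i ^ c i)"
  proof (rule sum.cong[OF refl])
    fix x :: "nat \<Rightarrow> 'a" assume "x \<in> supp0 {1..n}"
    show "mon n c x = (\<Prod>i\<in>{1..n}. x i ^ c i)"
      unfolding mon_def atMost_atLeast0 using c0
      by (simp add: prod.atLeast_Suc_atMost)
  qed
  also have "\<dots> = (\<Prod>i\<in>{1..n}. \<Sum>t\<in>(UNIV::'a set). t ^ c i)"
    by (rule sum_supp0_prod) simp
  also have "\<dots> = (\<Prod>i\<in>{1..n}. (-1::'a))"
    using ci m0 by (intro prod.cong) (auto simp: char_sum)
  finally show ?thesis by simp
qed



definition codeJ :: "nat \<Rightarrow> nat \<Rightarrow> nat \<Rightarrow> ((nat \<Rightarrow> 'a::{finite,field}) \<Rightarrow> 'a) set" where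
  "codeJ n j k = {(\<lambda>p. if p \<in> Hj n j then hom_poly_eval n k c p else 0) | c. True}"

definition restr :: "nat \<Rightarrow> nat \<Rightarrow> ((nat \<Rightarrow> 'a::field) \<Rightarrow> 'a) \<Rightarrow> ((nat \<Rightarrow> 'a) \<Rightarrow> 'a)" where
  "restr n j v = (\<lambda>p. if p \<in> Hj n j then v p else 0)"

definition Mj :: "nat \<Rightarrow> ((nat \<Rightarrow> 'a::field) \<Rightarrow> 'a) \<Rightarrow> ((nat \<Rightarrow> 'a) \<Rightarrow> 'a)" where
  "Mj j v = (\<lambda>p. p j * v p)"

lemma Hj0: "Hj n 0 = proj_points n" by (simp add: Hj_def)

lemma code0: "codeJ n 0 k = proj_RM_code n k"
  by (simp add: codeJ_def proj_RM_code_def Hj0)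

lemma Hj_mono: "j \<le> j' \<Longrightarrow> Hj n j' \<subseteq> Hj n j" by (auto simp: Hj_def)

lemma Hj_empty: "Hj n (Suc n) = {}"
  by (auto simp: Hj_def proj_points_def)

lemma finite_proj_points: "finite (proj_points n :: (nat \<Rightarrow> 'a::{finite,field}) set)"
proof -
  have "proj_points n \<subseteq> (supp0 {0..n} :: (nat \<Rightarrow> 'a) set)"
    by (auto simp: proj_points_def supp0_def)
  then show ?thesis using finite_supp0[of "{0..n}"] finite_subset by auto
qed

lemma finite_Hj: "finite (Hj n j :: (nat \<Rightarrow> 'a::{finite,field}) set)"
  using finite_proj_points[of n] by (rule finite_subset[rotated]) (auto simp: Hj_def)

lemma finite_codeJ: "finite (codeJ n j k :: ((nat \<Rightarrow> 'a::{finite,field}) \<Rightarrow> 'a) set)"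
proof -
  have "codeJ n j k \<subseteq> {f::(nat\<Rightarrow>'a)\<Rightarrow>'a. \<forall>x. (x \<in> Hj n j \<longrightarrow> f x \<in> UNIV) \<and> (x \<notin> Hj n j \<longrightarrow> f x = 0)}"
    by (auto simp: codeJ_def)
  moreover have "finite {f::(nat\<Rightarrow>'a)\<Rightarrow>'a. \<forall>x. (x \<in> Hj n j \<longrightarrow> f x \<in> UNIV) \<and> (x \<notin> Hj n j \<longrightarrow> f x = 0)}"
    by (rule finite_set_of_finite_funs[OF finite_Hj[of n j]]) simp
  ultimately show ?thesis by (rule finite_subset)
qed

lemma hpe_diff: "hom_poly_eval n k (\<lambda>e. c1 e - c2 e) p = hom_poly_eval n k c1 p - hom_poly_eval n k c2 p"
  by (simp add: hom_poly_eval_def sum_subtractf left_diff_distrib)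

lemma hpe_add: "hom_poly_eval n k (\<lambda>e. c1 e + c2 e) p = hom_poly_eval n k c1 p + hom_poly_eval n k c2 p"
  by (simp add: hom_poly_eval_def sum.distrib distrib_right)

lemma hpe_scale: "hom_poly_eval n k (\<lambda>e. t * c e) p = t * hom_poly_eval n k c p"
  by (simp add: hom_poly_eval_def sum_distrib_left mult.assoc)

lemma codeJ_diff: "v \<in> codeJ n j k \<Longrightarrow> w \<in> codeJ n j k \<Longrightarrow> v - w \<in> codeJ n j k"
proof -
  assume "v \<in> codeJ n j k" "w \<in> codeJ n j k"
  then obtain c1 c2 where "v = (\<lambda>p. if p \<in> Hj n j then hom_poly_eval n k c1 p else 0)"
    "w = (\<lambda>p. if p \<in> Hj n j then hom_poly_eval n k c2 p else 0)" by (auto simp: codeJ_def)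
  then have "v - w = (\<lambda>p. if p \<in> Hj n j then hom_poly_eval n k (\<lambda>e. c1 e - c2 e) p else 0)"
    by (auto simp: fun_eq_iff hpe_diff)
  then show ?thesis by (auto simp: codeJ_def)
qed

lemma codeJ_add: "v \<in> codeJ n j k \<Longrightarrow> w \<in> codeJ n j k \<Longrightarrow> v + w \<in> codeJ n j k"
proof -
  assume "v \<in> codeJ n j k" "w \<in> codeJ n j k"
  then obtain c1 c2 where "v = (\<lambda>p. if p \<in> Hj n j then hom_poly_eval n k c1 p else 0)"
    "w = (\<lambda>p. if p \<in> Hj n j then hom_poly_eval n k c2 p else 0)" by (auto simp: codeJ_def)
  then have "v + w = (\<lambda>p. if p \<in> Hj n j then hom_poly_eval n k (\<lambda>e. c1 e + c2 e) p else 0)"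
    by (auto simp: fun_eq_iff hpe_add)
  then show ?thesis by (auto simp: codeJ_def)
qed

lemma codeJ_scale: "v \<in> codeJ n j k \<Longrightarrow> (\<lambda>x. t * v x) \<in> codeJ n j k"
proof -
  assume "v \<in> codeJ n j k"
  then obtain c1 where "v = (\<lambda>p. if p \<in> Hj n j then hom_poly_eval n k c1 p else 0)"
    by (auto simp: codeJ_def)
  then have "(\<lambda>x. t * v x) = (\<lambda>p. if p \<in> Hj n j then hom_poly_eval n k (\<lambda>e. t * c1 e) p else 0)"
    by (auto simp: fun_eq_iff hpe_scale)
  then show ?thesis by (auto simp: codeJ_def)
qed

lemma codeJ_zero: "0 \<in> codeJ n j k"
proof -
  have "(0::(nat\<Rightarrow>'a)\<Rightarrow>'a) = (\<lambda>p. if p \<in> Hj n j then hom_poly_eval n k (\<lambda>e. 0) p else 0)"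
    by (auto simp: fun_eq_iff hom_poly_eval_def)
  then show ?thesis unfolding codeJ_def by blast
qed

lemma card_fiber:
  fixes f :: "'v::ab_group_add \<Rightarrow> 'w::ab_group_add"
  assumes fin: "finite V" and cl: "\<And>x y. x \<in> V \<Longrightarrow> y \<in> V \<Longrightarrow> x - y \<in> V"
    and add: "\<And>x y. f (x - y) = f x - f y"
  shows "card V = card {v\<in>V. f v = 0} * card (f ` V)"
proof -
  let ?K = "{v\<in>V. f v = 0}"
  have V: "V = (\<Union>y\<in>f ` V. {v\<in>V. f v = y})" by auto
  have fib: "card {v\<in>V. f v = y} = card ?K" if yV: "y \<in> f ` V" for y
  proof -
    obtain v0 where v0: "v0 \<in> V" "y = f v0" using yV by auto
    have "bij_betw (\<lambda>u. v0 - u) ?K {v\<in>V. f v = y}"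
    proof (rule bij_betw_byWitness[where f'="\<lambda>u. v0 - u"])
      show "(\<lambda>u. v0 - u) ` ?K \<subseteq> {v\<in>V. f v = y}" using v0 cl add by auto
      show "(\<lambda>u. v0 - u) ` {v\<in>V. f v = y} \<subseteq> ?K" using v0 cl add by auto
    qed auto
    then show ?thesis by (simp add: bij_betw_same_card)
  qed
  have "card V = (\<Sum>y\<in>f ` V. card {v\<in>V. f v = y})"
    by (subst V, rule card_UN_disjoint) (use fin in auto)
  also have "\<dots> = (\<Sum>y\<in>f ` V. card ?K)" using fib by simp
  finally show ?thesis by simp
qed

lemma restr_diff: "restr n j (x - y) = restr n j x - restr n j y"
  by (auto simp: restr_def fun_eq_iff)

lemma Mj_diff: "Mj j (x - y) = Mj j x - Mj j y"
  by (auto simp: Mj_def fun_eq_iff algebra_simps)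

lemma restr_img: "restr n (Suc j) ` codeJ n j k = codeJ n (Suc j) k"
proof -
  have "restr n (Suc j) (\<lambda>p. if p \<in> Hj n j then hom_poly_eval n k c p else 0)
      = (\<lambda>p. if p \<in> Hj n (Suc j) then hom_poly_eval n k c p else 0)" for c :: "(nat \<Rightarrow> nat) \<Rightarrow> 'a"
    using Hj_mono[of j "Suc j" n] by (auto simp: restr_def fun_eq_iff)
  then show ?thesis unfolding codeJ_def by (auto simp: image_iff) metis
qed



lemma finite_monomials: "finite (monomials_deg n k)"
proof -
  have "monomials_deg n k \<subseteq> {f. \<forall>x. (x \<in> {..n} \<longrightarrow> f x \<in> {..k}) \<and> (x \<notin> {..n} \<longrightarrow> f x = 0)}"
  proof (rule subsetI)
    fix e :: "nat \<Rightarrow> nat" assume "e \<in> monomials_deg n k"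
    then have e: "\<forall>i>n. e i = 0" "sum e {..n} = k" by (auto simp: monomials_deg_def)
    have "e x \<le> k" if "x \<le> n" for x using member_le_sum[of x "{..n}" e] e that by auto
    then show "e \<in> {f. \<forall>x. (x \<in> {..n} \<longrightarrow> f x \<in> {..k}) \<and> (x \<notin> {..n} \<longrightarrow> f x = 0)}"
      using e by auto
  qed
  moreover have "finite {f::nat\<Rightarrow>nat. \<forall>x. (x \<in> {..n} \<longrightarrow> f x \<in> {..k}) \<and> (x \<notin> {..n} \<longrightarrow> f x = 0)}"
    by (rule finite_set_of_finite_funs) auto
  ultimately show ?thesis by (rule finite_subset)
qed

lemma sum_upd_suc:
  fixes j n :: nat
  assumes "j \<le> n"
  shows "(\<Sum>i\<le>n. (e(j := Suc (e j))) i) = Suc (\<Sum>i\<le>n. e i)"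
proof -
  have "(\<Sum>i\<le>n. (e(j := Suc (e j))) i) = (e(j := Suc (e j))) j + (\<Sum>i\<in>{..n} - {j}. (e(j := Suc (e j))) i)"
    using assms by (intro sum.remove) auto
  also have "(\<Sum>i\<in>{..n} - {j}. (e(j := Suc (e j))) i) = (\<Sum>i\<in>{..n} - {j}. e i)"
    by (rule sum.cong) auto
  also have "(\<Sum>i\<le>n. e i) = e j + (\<Sum>i\<in>{..n} - {j}. e i)"
    using assms by (intro sum.remove) auto
  ultimately show ?thesis by simp
qed

lemma mon_upd_suc:
  assumes "j \<le> n"
  shows "mon n (e(j := Suc (e j))) p = p j * mon n e (p::nat\<Rightarrow>'a::comm_semiring_1)"
proof -
  have A: "mon n (e(j := Suc (e j))) p = p j ^ ((e(j := Suc (e j))) j) * (\<Prod>i\<in>{..n} - {j}. p i ^ (e(j := Suc (e j))) i)"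
    unfolding mon_def using assms by (intro prod.remove) auto
  have B: "(\<Prod>i\<in>{..n} - {j}. p i ^ (e(j := Suc (e j))) i) = (\<Prod>i\<in>{..n} - {j}. p i ^ e i)"
    by (rule prod.cong) auto
  have C: "mon n e p = p j ^ e j * (\<Prod>i\<in>{..n} - {j}. p i ^ e i)"
    unfolding mon_def using assms by (intro prod.remove) auto
  show ?thesis unfolding A B C by (simp add: mult.assoc)
qed

lemma bij_mono:
  assumes "j \<le> n"
  shows "bij_betw (\<lambda>e. e(j := Suc (e j))) (monomials_deg n k) {e \<in> monomials_deg n (Suc k). 0 < e j}"
proof -
  have h1: "\<forall>a\<in>monomials_deg n k. (\<lambda>e. e(j := e j - 1)) ((\<lambda>e. e(j := Suc (e j))) a) = a" by auto
  have h2: "\<forall>a'\<in>{e \<in> monomials_deg n (Suc k). 0 < e j}. (\<lambda>e. e(j := Suc (e j))) ((\<lambda>e. e(j := e j - 1)) a') = a'"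
    by (auto simp: fun_eq_iff)
  have h3: "(\<lambda>e. e(j := Suc (e j))) ` monomials_deg n k \<subseteq> {e \<in> monomials_deg n (Suc k). 0 < e j}"
  proof (rule subsetI)
    fix x assume "x \<in> (\<lambda>e. e(j := Suc (e j))) ` monomials_deg n k"
    then obtain e where x: "x = e(j := Suc (e j))" and e: "e \<in> monomials_deg n k" by blast
    have "(\<Sum>i\<le>n. x i) = Suc k" using sum_upd_suc[OF assms, of e] e x by (simp add: monomials_deg_def)
    then show "x \<in> {e \<in> monomials_deg n (Suc k). 0 < e j}"
      using e x assms by (auto simp: monomials_deg_def)
  qed
  have h4: "(\<lambda>e. e(j := e j - 1)) ` {e \<in> monomials_deg n (Suc k). 0 < e j} \<subseteq> monomials_deg n k"
  proof (rule subsetI)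
    fix x assume "x \<in> (\<lambda>e. e(j := e j - 1)) ` {e \<in> monomials_deg n (Suc k). 0 < e j}"
    then obtain e where x: "x = e(j := e j - 1)" and e: "e \<in> monomials_deg n (Suc k)" "0 < e j" by blast
    let ?e = "e(j := e j - 1)"
    have "e = ?e(j := Suc (?e j))" using e(2) by (auto simp: fun_eq_iff)
    then have "(\<Sum>i\<le>n. e i) = Suc (\<Sum>i\<le>n. ?e i)" using sum_upd_suc[OF assms, of ?e] by metis
    then show "x \<in> monomials_deg n k" using e assms x by (auto simp: monomials_deg_def)
  qed
  show ?thesis by (rule bij_betw_byWitness[OF h1 h2 h3 h4])
qed

definition shiftc :: "nat \<Rightarrow> ((nat \<Rightarrow> nat) \<Rightarrow> 'a::zero) \<Rightarrow> (nat \<Rightarrow> nat) \<Rightarrow> 'a" where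
  "shiftc j c e = (if 0 < e j then c (e(j := e j - 1)) else 0)"

lemma hpe_mon: "hom_poly_eval n k c p = (\<Sum>e\<in>monomials_deg n k. c e * mon n e p)"
  by (simp add: hom_poly_eval_def mon_def)

lemma hpe_shift:
  assumes "j \<le> n"
  shows "hom_poly_eval n (Suc k) (shiftc j c) p = p j * hom_poly_eval n k c (p::nat\<Rightarrow>'a::field)"
proof -
  have "hom_poly_eval n (Suc k) (shiftc j c) p
      = (\<Sum>e\<in>monomials_deg n (Suc k). if 0 < e j then c (e(j := e j - 1)) * mon n e p else 0)"
    unfolding hpe_mon shiftc_def by (rule sum.cong) auto
  also have "\<dots> = (\<Sum>e\<in>{e \<in> monomials_deg n (Suc k). 0 < e j}. c (e(j := e j - 1)) * mon n e p)"
    by (rule sum.inter_filter[symmetric, OF finite_monomials])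
  also have "\<dots> = (\<Sum>e\<in>monomials_deg n k. c ((e(j := Suc (e j)))(j := (e(j := Suc (e j))) j - 1)) * mon n (e(j := Suc (e j))) p)"
    by (rule sum.reindex_bij_betw[OF bij_mono[OF assms], symmetric])
  also have "\<dots> = (\<Sum>e\<in>monomials_deg n k. p j * (c e * mon n e p))"
    using assms by (intro sum.cong) (auto simp: mon_upd_suc)
  finally show ?thesis by (simp add: hpe_mon sum_distrib_left)
qed

lemma Mj_in: "j \<le> n \<Longrightarrow> v \<in> codeJ n j k \<Longrightarrow> Mj j v \<in> codeJ n j (Suc k)"
proof -
  assume j: "j \<le> n" and "v \<in> codeJ n j k"
  then obtain c where v: "v = (\<lambda>p. if p \<in> Hj n j then hom_poly_eval n k c p else 0)"
    by (auto simp: codeJ_def)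
  then have "Mj j v = (\<lambda>p. if p \<in> Hj n j then hom_poly_eval n (Suc k) (shiftc j c) p else 0)"
    by (auto simp: Mj_def fun_eq_iff hpe_shift[OF j])
  then show ?thesis by (auto simp: codeJ_def)
qed

lemma Mj_kill: "restr n (Suc j) (Mj j v) = 0"
  by (auto simp: restr_def Mj_def fun_eq_iff Hj_def)

lemma KM_fix:
  assumes "v \<in> codeJ n j k" "Mj j v = 0"
  shows "restr n (Suc j) v = v"
proof
  fix p
  show "restr n (Suc j) v p = v p"
  proof (cases "p \<in> Hj n (Suc j)")
    case True then show ?thesis by (simp add: restr_def)
  next
    case False
    show ?thesis
    proof (cases "p \<in> Hj n j")
      case False
      then show ?thesis using assms(1) \<open>p \<notin> Hj n (Suc j)\<close> by (auto simp: codeJ_def restr_def)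
    next
      case True
      then have "p j \<noteq> 0" using \<open>p \<notin> Hj n (Suc j)\<close> by (auto simp: Hj_def less_Suc_eq)
      moreover have "p j * v p = 0" using assms(2) by (auto simp: Mj_def fun_eq_iff)
      ultimately show ?thesis using \<open>p \<notin> Hj n (Suc j)\<close> by (simp add: restr_def)
    qed
  qed
qed



lemma codeJ_top: "codeJ n (Suc n) k = {0}"
  by (auto simp: codeJ_def Hj_empty fun_eq_iff)

lemma core:
  fixes n j k :: nat
  assumes j: "j \<le> n"
  defines "KM \<equiv> {v\<in>(codeJ n j k :: ((nat\<Rightarrow>'a::{finite,field})\<Rightarrow>'a) set). Mj j v = 0}"
    and "Kr \<equiv> {w\<in>(codeJ n j (Suc k) :: ((nat\<Rightarrow>'a)\<Rightarrow>'a) set). restr n (Suc j) w = 0}"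
  shows "card (codeJ n j k :: ((nat\<Rightarrow>'a)\<Rightarrow>'a) set) \<le> card KM * card Kr"
    and "restr n (Suc j) ` KM \<subseteq> codeJ n (Suc j) k" and "card KM = card (restr n (Suc j) ` KM)"
    and "card (codeJ n j (Suc k) :: ((nat\<Rightarrow>'a)\<Rightarrow>'a) set) = card Kr * card (codeJ n (Suc j) (Suc k) :: ((nat\<Rightarrow>'a)\<Rightarrow>'a) set)"
    and "0 \<in> Kr"
proof -
  have "card (codeJ n j k :: ((nat\<Rightarrow>'a)\<Rightarrow>'a) set) = card KM * card (Mj j ` (codeJ n j k :: ((nat\<Rightarrow>'a)\<Rightarrow>'a) set))"
    unfolding KM_def by (rule card_fiber) (simp_all add: finite_codeJ codeJ_diff Mj_diff)
  moreover have "Mj j ` (codeJ n j k :: ((nat\<Rightarrow>'a)\<Rightarrow>'a) set) \<subseteq> Kr" unfolding Kr_def using Mj_in[OF j] Mj_kill by auto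
  moreover have "finite Kr" unfolding Kr_def by (rule finite_subset[OF _ finite_codeJ]) auto
  ultimately show "card (codeJ n j k :: ((nat\<Rightarrow>'a)\<Rightarrow>'a) set) \<le> card KM * card Kr"
    by (simp add: card_mono)
  show "restr n (Suc j) ` KM \<subseteq> codeJ n (Suc j) k" unfolding KM_def using restr_img[of n j k] by auto
  have "inj_on (restr n (Suc j)) KM"
  proof (rule inj_onI)
    fix x y assume "x \<in> KM" "y \<in> KM" "restr n (Suc j) x = restr n (Suc j) y"
    then have x: "x \<in> codeJ n j k" "Mj j x = 0" and y: "y \<in> codeJ n j k" "Mj j y = 0"
      and e: "restr n (Suc j) x = restr n (Suc j) y" unfolding KM_def by auto
    show "x = y" by (metis KM_fix[OF x] KM_fix[OF y] e)
  qed
  then show "card KM = card (restr n (Suc j) ` KM)" by (simp add: card_image)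
  have "card (codeJ n j (Suc k) :: ((nat\<Rightarrow>'a)\<Rightarrow>'a) set) = card Kr * card (restr n (Suc j) ` (codeJ n j (Suc k) :: ((nat\<Rightarrow>'a)\<Rightarrow>'a) set))"
    unfolding Kr_def by (rule card_fiber) (simp_all add: finite_codeJ codeJ_diff restr_diff)
  then show "card (codeJ n j (Suc k) :: ((nat\<Rightarrow>'a)\<Rightarrow>'a) set) = card Kr * card (codeJ n (Suc j) (Suc k) :: ((nat\<Rightarrow>'a)\<Rightarrow>'a) set)"
    by (simp add: restr_img)
  show "0 \<in> Kr" unfolding Kr_def using codeJ_zero by (auto simp: restr_def fun_eq_iff)
qed

lemma mono_aux:
  "d \<le> Suc n \<Longrightarrow> card (codeJ n (Suc n - d) k :: ((nat\<Rightarrow>'a::{finite,field})\<Rightarrow>'a) set)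
     \<le> card (codeJ n (Suc n - d) (Suc k) :: ((nat\<Rightarrow>'a)\<Rightarrow>'a) set)"
proof (induction d arbitrary: k)
  case 0 then show ?case by (simp add: codeJ_top)
next
  case (Suc d)
  define j where "j = n - d"
  have j: "j \<le> n" "Suc n - Suc d = j" "Suc j = Suc n - d" using Suc.prems by (auto simp: j_def)
  let ?KM = "{v\<in>(codeJ n j k :: ((nat\<Rightarrow>'a)\<Rightarrow>'a) set). Mj j v = 0}"
  let ?Kr = "{w\<in>(codeJ n j (Suc k) :: ((nat\<Rightarrow>'a)\<Rightarrow>'a) set). restr n (Suc j) w = 0}"
  have cr1: "card (codeJ n j k :: ((nat\<Rightarrow>'a)\<Rightarrow>'a) set) \<le> card ?KM * card ?Kr"
    by (rule core(1)[OF j(1)])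
  have cr2: "restr n (Suc j) ` ?KM \<subseteq> codeJ n (Suc j) k" by (rule core(2)[OF j(1)])
  have cr3: "card ?KM = card (restr n (Suc j) ` ?KM)" by (rule core(3)[OF j(1)])
  have cr4: "card (codeJ n j (Suc k) :: ((nat\<Rightarrow>'a)\<Rightarrow>'a) set) = card ?Kr * card (codeJ n (Suc j) (Suc k) :: ((nat\<Rightarrow>'a)\<Rightarrow>'a) set)"
    by (rule core(4)[OF j(1)])
  have "card ?KM \<le> card (codeJ n (Suc j) k :: ((nat\<Rightarrow>'a)\<Rightarrow>'a) set)"
    using cr3 card_mono[OF finite_codeJ cr2] by simp
  also have "\<dots> \<le> card (codeJ n (Suc j) (Suc k) :: ((nat\<Rightarrow>'a)\<Rightarrow>'a) set)"
    using Suc.IH[of k] Suc.prems j(3) by simp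
  finally have kmle: "card ?KM \<le> card (codeJ n (Suc j) (Suc k) :: ((nat\<Rightarrow>'a)\<Rightarrow>'a) set)" .
  have "card ?KM * card ?Kr \<le> card (codeJ n (Suc j) (Suc k) :: ((nat\<Rightarrow>'a)\<Rightarrow>'a) set) * card ?Kr"
    using kmle by (rule mult_right_mono) simp
  with cr1 have "card (codeJ n j k :: ((nat\<Rightarrow>'a)\<Rightarrow>'a) set) \<le> card (codeJ n (Suc j) (Suc k) :: ((nat\<Rightarrow>'a)\<Rightarrow>'a) set) * card ?Kr"
    by (rule order_trans)
  also have "\<dots> = card (codeJ n j (Suc k) :: ((nat\<Rightarrow>'a)\<Rightarrow>'a) set)"
    using cr4 by (simp only: mult.commute)
  finally show ?case using j(2) by simp
qed

lemma code_mono: "card (codeJ n j k :: ((nat\<Rightarrow>'a::{finite,field})\<Rightarrow>'a) set)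
     \<le> card (codeJ n j (Suc k) :: ((nat\<Rightarrow>'a)\<Rightarrow>'a) set)"
proof (cases "j \<le> Suc n")
  case True
  then show ?thesis using mono_aux[of "Suc n - j" n k, where 'a='a] by simp
next
  case False
  then have "Hj n j = ({}::(nat\<Rightarrow>'a) set)" using Hj_mono[of "Suc n" j n] Hj_empty[of n] by auto
  then show ?thesis by (simp add: codeJ_def)
qed



interpretation VS: vector_space "\<lambda>(a::'a::field) (v::(nat\<Rightarrow>'a)\<Rightarrow>'a). (\<lambda>x. a * v x)"
  by unfold_locales (auto simp: fun_eq_iff algebra_simps)

lemma card_span:
  fixes B :: "((nat\<Rightarrow>'a::{finite,field})\<Rightarrow>'a) set"
  assumes "finite B" "VS.independent B"
  shows "finite (VS.span B) \<and> card (VS.span B) = CARD('a) ^ card B"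
  using assms
proof (induction B rule: finite_induct)
  case empty then show ?case by simp
next
  case (insert a B)
  have ind: "VS.independent B" and na: "a \<notin> VS.span B"
    using insert(4) insert(2) by (auto simp: VS.independent_insert)
  then have IH: "finite (VS.span B)" "card (VS.span B) = CARD('a) ^ card B" using insert(3) by auto
  let ?g = "\<lambda>(t::'a, v). (\<lambda>x. t * a x) + v"
  have img: "VS.span (insert a B) = ?g ` (UNIV \<times> VS.span B)"
  proof (rule set_eqI, rule iffI)
    fix x assume "x \<in> VS.span (insert a B)"
    then obtain k where k: "x - (\<lambda>y. k * a y) \<in> VS.span B" by (auto simp: VS.span_insert)
    have "x = ?g (k, x - (\<lambda>y. k * a y))" by (auto simp: fun_eq_iff)
    then show "x \<in> ?g ` (UNIV \<times> VS.span B)" using k by blast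
  next
    fix x assume "x \<in> ?g ` (UNIV \<times> VS.span B)"
    then obtain t v where x: "x = (\<lambda>y. t * a y) + v" "v \<in> VS.span B" by auto
    have "x - (\<lambda>y. t * a y) = v" using x by (auto simp: fun_eq_iff)
    then show "x \<in> VS.span (insert a B)" using x(2) by (auto simp: VS.span_insert)
  qed
  have inj: "inj_on ?g (UNIV \<times> VS.span B)"
  proof (rule inj_onI)
    fix z z' assume z: "z \<in> UNIV \<times> VS.span B" "z' \<in> UNIV \<times> VS.span B" and e: "?g z = ?g z'"
    obtain t v t' v' where zz: "z = (t, v)" "z' = (t', v')" by fastforce
    have v: "v \<in> VS.span B" "v' \<in> VS.span B" using z zz by auto
    have e2: "(\<lambda>x. (t - t') * a x) = v' - v" using e zz by (auto simp: fun_eq_iff algebra_simps)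
    have tt: "t = t'"
    proof (rule ccontr)
      assume "t \<noteq> t'"
      have "v' - v \<in> VS.span B" using v by (rule VS.span_diff[rotated])
      then have "(\<lambda>x. inverse (t - t') * (v' - v) x) \<in> VS.span B" by (rule VS.span_scale)
      moreover have "(\<lambda>x. inverse (t - t') * (v' - v) x) = a"
        using \<open>t \<noteq> t'\<close> e2[symmetric] by (auto simp: fun_eq_iff)
      ultimately show False using na by simp
    qed
    then have "v = v'" using e2 by (auto simp: fun_eq_iff)
    then show "z = z'" using tt zz by simp
  qed
  have "card (VS.span (insert a B)) = card ((UNIV::'a set) \<times> VS.span B)"
    unfolding img by (rule card_image[OF inj])
  also have "\<dots> = CARD('a) * CARD('a) ^ card B" using IH by (simp add: card_cartesian_product)
  finally show ?case using img IH insert(1,2) by simp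
qed

lemma card_dim:
  fixes C :: "((nat\<Rightarrow>'a::{finite,field})\<Rightarrow>'a) set"
  assumes "finite C" "VS.subspace C"
  shows "card C = CARD('a) ^ VS.dim C"
proof -
  obtain B where B: "B \<subseteq> C" "VS.independent B" "C \<subseteq> VS.span B" "card B = VS.dim C"
    by (rule VS.basis_exists)
  have "finite B" using B(1) assms(1) by (rule finite_subset)
  have "VS.span B = C" using VS.span_subspace[OF B(1) B(3) assms(2)] .
  then show ?thesis using card_span[OF \<open>finite B\<close> B(2)] B(4) by simp
qed



lemma exists_b:
  "k \<le> n * m \<Longrightarrow> \<exists>b::nat\<Rightarrow>nat. b 0 = 0 \<and> (\<forall>i>n. b i = 0) \<and> (\<forall>i. b i \<le> m) \<and> (\<Sum>i\<le>n. b i) = k"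
proof (induction n arbitrary: k)
  case 0 then show ?case by (intro exI[of _ "\<lambda>_. 0"]) auto
next
  case (Suc n)
  show ?case
  proof (cases "k \<le> n * m")
    case True
    then obtain b where b: "b 0 = 0" "\<forall>i>n. b i = 0" "\<forall>i. b i \<le> m" "(\<Sum>i\<le>n. b i) = k"
      using Suc.IH by blast
    then show ?thesis by (intro exI[of _ b]) auto
  next
    case False
    obtain b where b: "b 0 = 0" "\<forall>i>n. b i = 0" "\<forall>i. b i \<le> m" "(\<Sum>i\<le>n. b i) = n * m"
      using Suc.IH[of "n * m"] by blast
    define b' where "b' = b(Suc n := k - n * m)"
    have "(\<Sum>i\<le>n. b' i) = (\<Sum>i\<le>n. b i)" by (rule sum.cong) (auto simp: b'_def)
    then have "(\<Sum>i\<le>Suc n. b' i) = k" using b(4) False by (simp add: b'_def)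
    moreover have "\<forall>i. b' i \<le> m" using b(3) Suc.prems by (auto simp: b'_def)
    moreover have "\<forall>i>Suc n. b' i = 0" using b(2) by (auto simp: b'_def)
    ultimately show ?thesis using b(1) by (intro exI[of _ b']) (auto simp: b'_def)
  qed
qed

lemma mon_mult: "mon n e p * mon n a p = mon n (\<lambda>i. e i + a i) (p::nat\<Rightarrow>'a::comm_semiring_1)"
  by (simp add: mon_def power_add prod.distrib)

lemma strict:
  fixes n k :: nat
  assumes n: "1 \<le> n" and k: "k < n * (CARD('a::{finite,field}) - 1)"
  shows "card (codeJ n 0 k :: ((nat\<Rightarrow>'a)\<Rightarrow>'a) set) < card (codeJ n 0 (Suc k) :: ((nat\<Rightarrow>'a)\<Rightarrow>'a) set)"
proof -
  let ?m = "CARD('a) - 1"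
  obtain b where b: "b 0 = 0" "\<forall>i>n. b i = 0" "\<forall>i. b i \<le> ?m" "(\<Sum>i\<le>n. b i) = k"
    using exists_b[of k n ?m] k by auto
  define a where "a = (\<lambda>i. if 1 \<le> i \<and> i \<le> n then ?m - b i else (0::nat))"
  have ab: "(\<Sum>i\<le>n. a i + b i) = n * ?m"
  proof -
    have "(\<Sum>i\<le>n. a i + b i) = (a 0 + b 0) + (\<Sum>i\<in>{1..n}. a i + b i)"
      by (simp add: atMost_atLeast0 sum.atLeast_Suc_atMost)
    also have "(\<Sum>i\<in>{1..n}. a i + b i) = (\<Sum>i\<in>{1..n}. ?m)"
    proof (rule sum.cong[OF refl])
      fix i assume "i \<in> {1..n}"
      then show "a i + b i = ?m" using b(3)[rule_format, of i] by (simp add: a_def)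
    qed
    finally show ?thesis using b(1) by (simp add: a_def)
  qed
  then have sa: "(\<Sum>i\<le>n. a i) + k = n * ?m" using b(4) by (simp add: sum.distrib)
  let ?KM = "{v\<in>(codeJ n 0 k :: ((nat\<Rightarrow>'a)\<Rightarrow>'a) set). Mj 0 v = 0}"
  let ?Kr = "{w\<in>(codeJ n 0 (Suc k) :: ((nat\<Rightarrow>'a)\<Rightarrow>'a) set). restr n (Suc 0) w = 0}"
  let ?W = "codeJ n (Suc 0) k :: ((nat\<Rightarrow>'a)\<Rightarrow>'a) set"
  define \<phi> where "\<phi> w = (\<Sum>p\<in>(Hj n 1 :: (nat\<Rightarrow>'a) set). w p * mon n a p)" for w :: "(nat\<Rightarrow>'a)\<Rightarrow>'a"
  have cr1: "card (codeJ n 0 k :: ((nat\<Rightarrow>'a)\<Rightarrow>'a) set) \<le> card ?KM * card ?Kr"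
    by (rule core(1)) simp
  have cr2: "restr n (Suc 0) ` ?KM \<subseteq> ?W" by (rule core(2)) simp
  have cr3: "card ?KM = card (restr n (Suc 0) ` ?KM)" by (rule core(3)) simp
  have cr4: "card (codeJ n 0 (Suc k) :: ((nat\<Rightarrow>'a)\<Rightarrow>'a) set) = card ?Kr * card (codeJ n (Suc 0) (Suc k) :: ((nat\<Rightarrow>'a)\<Rightarrow>'a) set)"
    by (rule core(4)) simp
  have cr5: "0 \<in> ?Kr" by (rule core(5)) simp
  have vanish: "\<phi> w = 0" if w: "w \<in> restr n (Suc 0) ` ?KM" for w
  proof -
    obtain v where v: "v \<in> codeJ n 0 k" "Mj 0 v = 0" "w = restr n (Suc 0) v" using w by auto
    have vw: "w = v" using KM_fix[OF v(1,2)] v(3) by simp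
    obtain c where c: "v = (\<lambda>p. if p \<in> Hj n 0 then hom_poly_eval n k c p else 0)"
      using v(1) by (auto simp: codeJ_def)
    have "\<phi> w = (\<Sum>p\<in>(Hj n 0 :: (nat\<Rightarrow>'a) set). v p * mon n a p)"
      unfolding \<phi>_def vw
    proof (rule sum.mono_neutral_left[OF finite_Hj])
      show "Hj n 1 \<subseteq> (Hj n 0 :: (nat\<Rightarrow>'a) set)" by (rule Hj_mono) simp
      show "\<forall>p\<in>Hj n 0 - Hj n 1. v p * mon n a p = 0"
      proof
        fix p assume "p \<in> Hj n 0 - (Hj n 1 :: (nat\<Rightarrow>'a) set)"
        then have "restr n (Suc 0) v p = 0" by (simp add: restr_def)
        then show "v p * mon n a p = 0" using KM_fix[OF v(1,2)] by simp
      qed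
    qed
    also have "\<dots> = (\<Sum>p\<in>(Hj n 0 :: (nat\<Rightarrow>'a) set). \<Sum>e\<in>monomials_deg n k. c e * mon n (\<lambda>i. e i + a i) p)"
      by (rule sum.cong[OF refl]) (simp add: c hpe_mon sum_distrib_right mult.assoc mon_mult)
    also have "\<dots> = (\<Sum>e\<in>monomials_deg n k. c e * (\<Sum>p\<in>(Hj n 0 :: (nat\<Rightarrow>'a) set). mon n (\<lambda>i. e i + a i) p))"
      by (simp add: sum.swap[of _ "Hj n 0"] sum_distrib_left)
    also have "\<dots> = 0"
    proof (rule sum.neutral, rule ballI)
      fix e assume "e \<in> monomials_deg n k"
      then have "(\<Sum>i\<le>n. e i) = k" by (simp add: monomials_deg_def)
      then have "(\<Sum>i\<le>n. e i + a i) = n * ?m" using sa by (simp add: sum.distrib)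
      then show "c e * (\<Sum>p\<in>(Hj n 0 :: (nat\<Rightarrow>'a) set). mon n (\<lambda>i. e i + a i) p) = 0"
      proof -
        have "(\<Sum>p\<in>(Hj n 0 :: (nat\<Rightarrow>'a) set). mon n (\<lambda>i. e i + a i) p) = 0"
          by (rule sum_H0_vanish[OF n]) fact
        then show ?thesis by simp
      qed
    qed
    finally show ?thesis .
  qed
  define v0 where "v0 = (\<lambda>p. if p \<in> (Hj n 0 :: (nat\<Rightarrow>'a) set) then hom_poly_eval n k (\<lambda>e. if e = b then 1 else 0) p else 0)"
  have v0in: "v0 \<in> codeJ n 0 k" unfolding v0_def codeJ_def by blast
  have bmon: "b \<in> monomials_deg n k" using b by (simp add: monomials_deg_def)
  have wstar: "restr n (Suc 0) v0 \<in> ?W" using v0in restr_img[of n 0 k] by blast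
  have "\<phi> (restr n (Suc 0) v0) = (\<Sum>p\<in>(Hj n 1 :: (nat\<Rightarrow>'a) set). mon n (\<lambda>i. b i + a i) p)"
    unfolding \<phi>_def
  proof (rule sum.cong[OF refl])
    fix p assume p: "p \<in> (Hj n 1 :: (nat\<Rightarrow>'a) set)"
    then have "p \<in> Hj n 0" using Hj_mono[of 0 1 n] by auto
    then have "restr n (Suc 0) v0 p = mon n b p"
      using p bmon by (simp add: finite_monomials restr_def v0_def hpe_mon if_distrib[of "\<lambda>x. x * _"] cong: if_cong)
    then show "restr n (Suc 0) v0 p * mon n a p = mon n (\<lambda>i. b i + a i) p" by (simp add: mon_mult)
  qed
  also have "\<dots> \<noteq> 0"
  proof (rule sum_H1_nonvanish[OF n])
    show "b 0 + a 0 = 0" using b(1) by (simp add: a_def)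
    show "b i + a i = ?m" if "1 \<le> i" "i \<le> n" for i using that b(3)[rule_format, of i] by (simp add: a_def)
  qed
  finally have "restr n (Suc 0) v0 \<notin> restr n (Suc 0) ` ?KM" using vanish by blast
  then have "restr n (Suc 0) ` ?KM \<subset> ?W" using cr2 wstar by blast
  then have "card ?KM < card ?W" using cr3 psubset_card_mono[OF finite_codeJ] by simp
  also have "card ?W \<le> card (codeJ n (Suc 0) (Suc k) :: ((nat\<Rightarrow>'a)\<Rightarrow>'a) set)" by (rule code_mono)
  finally have lt: "card ?KM < card (codeJ n (Suc 0) (Suc k) :: ((nat\<Rightarrow>'a)\<Rightarrow>'a) set)" .
  have "finite ?Kr" by (rule finite_subset[OF _ finite_codeJ]) auto
  then have "card ?Kr > 0" using cr5 by (auto simp: card_gt_0_iff)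
  then have "card ?KM * card ?Kr < card (codeJ n (Suc 0) (Suc k) :: ((nat\<Rightarrow>'a)\<Rightarrow>'a) set) * card ?Kr"
    using lt by simp
  with cr1 have "card (codeJ n 0 k :: ((nat\<Rightarrow>'a)\<Rightarrow>'a) set) < card (codeJ n (Suc 0) (Suc k) :: ((nat\<Rightarrow>'a)\<Rightarrow>'a) set) * card ?Kr"
    by (rule le_less_trans)
  also have "\<dots> = card (codeJ n 0 (Suc k) :: ((nat\<Rightarrow>'a)\<Rightarrow>'a) set)" using cr4 by (simp only: mult.commute)
  finally show ?thesis .
qed

lemma subspace_code: "VS.subspace (codeJ n 0 k :: ((nat\<Rightarrow>'a::{finite,field})\<Rightarrow>'a) set)"
  unfolding VS.subspace_def using codeJ_zero codeJ_add codeJ_scale by blast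

theorem mainTheorem1:
  fixes n k :: nat
  assumes "n \<ge> 1" and "1 \<le> k" and "k < n * (card (UNIV :: 'a::{finite,field} set) - 1)"
  shows "code_dim (proj_RM_code n k :: ((nat \<Rightarrow> 'a) \<Rightarrow> 'a) set)
           < code_dim (proj_RM_code n (k + 1) :: ((nat \<Rightarrow> 'a) \<Rightarrow> 'a) set)"
proof -
  have lt: "card (codeJ n 0 k :: ((nat\<Rightarrow>'a)\<Rightarrow>'a) set) < card (codeJ n 0 (Suc k) :: ((nat\<Rightarrow>'a)\<Rightarrow>'a) set)"
    using strict[of n k] assms by simp
  have "CARD('a) ^ VS.dim (codeJ n 0 k :: ((nat\<Rightarrow>'a)\<Rightarrow>'a) set) < CARD('a) ^ VS.dim (codeJ n 0 (Suc k) :: ((nat\<Rightarrow>'a)\<Rightarrow>'a) set)"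
  proof -
    have c1: "card (codeJ n 0 k :: ((nat\<Rightarrow>'a)\<Rightarrow>'a) set) = CARD('a) ^ VS.dim (codeJ n 0 k :: ((nat\<Rightarrow>'a)\<Rightarrow>'a) set)"
      by (rule card_dim[OF finite_codeJ subspace_code])
    have c2: "card (codeJ n 0 (Suc k) :: ((nat\<Rightarrow>'a)\<Rightarrow>'a) set) = CARD('a) ^ VS.dim (codeJ n 0 (Suc k) :: ((nat\<Rightarrow>'a)\<Rightarrow>'a) set)"
      by (rule card_dim[OF finite_codeJ subspace_code])
    show ?thesis using lt unfolding c1 c2 .
  qed
  then have "VS.dim (codeJ n 0 k :: ((nat\<Rightarrow>'a)\<Rightarrow>'a) set) < VS.dim (codeJ n 0 (Suc k) :: ((nat\<Rightarrow>'a)\<Rightarrow>'a) set)"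
    using card_ge2[where 'a='a] by (simp add: power_strict_increasing_iff)
  then show ?thesis by (simp add: code_dim_def code0)
qed

end
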